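(* There is a unique $w\in\mathbb{R}^n$ with $w_j>0$ for all $j$, lying in the row span of $A$, such that $\sum_{j=1}^nA_{lj}/w_j=b_l$ for $l=1,\dots,m$ (i.e. $(1/w_j)_j\in K_n$). Moreover, $P_{n,w}$ for this $w$ has maximal entropy among all probability distributions on $\mathbb{R}^n_{\ge0}$ whose mean vector exists and lies in $K_n$. Furthermore $w=A^t\Lambda_0$, where $\Lambda_0$ is the unique minimizer over $\mathbb{R}^m$ of the convex function $$H_n(\Lambda):=\log\int_{\mathbb{R}^n_{\ge0}}e^{-\Lambda^tAx}dx+\langle\Lambda,b\rangle=-\sum_{j=1}^n\log\big((A^t\Lambda)_j\big)+\langle\Lambda,b\rangle,$$ with the convention $\log\tau=-\infty$ for $\tau\le0$ (so $H_n$ may be $+\infty$).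
   Context: Fix $n>m\ge1$. $A$ is a real $m\times n$ matrix of rank $m$ and $b\in\mathbb{R}^m$ such that $K_n:=\{x\in\mathbb{R}^n: x\ge0,\ Ax=b\}$ is compact and contains a point with all coordinates strictly positive. For $w$ with all $w_j>0$, $P_{n,w}$ is the probability measure on $\mathbb{R}^n$ with density $(\prod_jw_j)e^{-\sum_jw_jx_j}\mathbf 1_{x\ge0}$. The entropy of an absolutely continuous probability measure with density $f$ is $-\int f\log f$ if $f\log f$ is integrable and $-\infty$ otherwise. *)

theory Defs
  imports "HOL-Analysis.Analysis" "HOL-Probability.Probability"
begin

definition orthant :: "(real^'n) set" where
  "orthant = {x. \<forall>j. 0 \<le> x $ j}"

definition Kset :: "real^'n^'m \<Rightarrow> real^'m \<Rightarrow> (real^'n) set" where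
  "Kset A b = {x. (\<forall>j. 0 \<le> x $ j) \<and> A *v x = b}"

definition exp_density :: "real^'n \<Rightarrow> real^'n \<Rightarrow> real" where
  "exp_density w x = (\<Prod>j\<in>UNIV. w $ j) * exp (- (\<Sum>j\<in>UNIV. w $ j * x $ j)) * indicator orthant x"

definition orthant_prob_density :: "(real^'n \<Rightarrow> real) \<Rightarrow> bool" where
  "orthant_prob_density f \<longleftrightarrow> f \<in> borel_measurable lborel \<and>
     (AE x in lborel. 0 \<le> f x) \<and> (AE x in lborel. x \<notin> orthant \<longrightarrow> f x = 0) \<and>
     integrable lborel f \<and> integral\<^sup>L lborel f = 1"

definition mean_exists :: "(real^'n \<Rightarrow> real) \<Rightarrow> bool" where
  "mean_exists f \<longleftrightarrow> (\<forall>j. integrable lborel (\<lambda>x. f x * x $ j))"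

definition mean_vec :: "(real^'n \<Rightarrow> real) \<Rightarrow> real^'n" where
  "mean_vec f = (\<chi> j. integral\<^sup>L lborel (\<lambda>x. f x * x $ j))"

definition dens_entropy :: "(real^'n \<Rightarrow> real) \<Rightarrow> ereal" where
  "dens_entropy f = (if integrable lborel (\<lambda>x. f x * ln (f x))
      then ereal (- integral\<^sup>L lborel (\<lambda>x. f x * ln (f x))) else -\<infinity>)"

definition Hn :: "real^'n^'m \<Rightarrow> real^'m \<Rightarrow> real^'m \<Rightarrow> ereal" where
  "Hn A b \<Lambda> = (if \<forall>j. 0 < (transpose A *v \<Lambda>) $ j
      then ereal (- (\<Sum>j\<in>UNIV. ln ((transpose A *v \<Lambda>) $ j)) + \<Lambda> \<bullet> b)
      else \<infinity>)"

end

theory Submission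
  imports Defs
begin


lemma inner_Ax: fixes A :: "real^'n^'m"
  shows "L \<bullet> (A *v x) = (transpose A *v L) \<bullet> x"
  by (metis dot_lmul_matrix transpose_transpose vector_transpose_matrix inner_commute)

lemma Basis_vec_real: "(Basis :: (real^'n) set) = range (\<lambda>j. axis j 1)"
  by (auto simp: Basis_vec_def)

lemma nn_integral_vec_prod:
  fixes g :: "'n::finite \<Rightarrow> real \<Rightarrow> ennreal"
  assumes [measurable]: "\<And>j. g j \<in> borel_measurable borel"
  shows "(\<integral>\<^sup>+x. (\<Prod>j\<in>UNIV. g j (x $ j)) \<partial>(lborel :: (real^'n) measure)) = (\<Prod>j\<in>UNIV. (\<integral>\<^sup>+t. g j t \<partial>lborel))"
proof -
  define f where "f b = g (SOME j. b = axis j (1::real))" for b :: "real^'n"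
  have inj: "inj (\<lambda>j::'n. axis j (1::real))" by (auto simp: inj_on_def axis_eq_axis)
  have fa: "f (axis j 1) = g j" for j
    unfolding f_def by (rule arg_cong[where f=g]) (metis (mono_tags, lifting) inj injD someI_ex)
  have "(\<integral>\<^sup>+x. (\<Prod>b\<in>Basis. f b (x \<bullet> b)) \<partial>(lborel :: (real^'n) measure)) = (\<Prod>b\<in>Basis. (\<integral>\<^sup>+x. f b x \<partial>lborel))"
    by (rule nn_integral_lborel_prod) (auto simp: Basis_vec_real fa)
  moreover have "(\<Prod>b\<in>Basis. f b (x \<bullet> b)) = (\<Prod>j\<in>UNIV. g j (x $ j))" for x :: "real^'n"
    by (simp add: Basis_vec_real prod.reindex[OF inj] fa inner_axis)
  moreover have "(\<Prod>b\<in>(Basis::(real^'n) set). (\<integral>\<^sup>+x. f b x \<partial>lborel)) = (\<Prod>j\<in>UNIV. (\<integral>\<^sup>+t. g j t \<partial>lborel))"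
    by (simp add: Basis_vec_real prod.reindex[OF inj] fa)
  ultimately show ?thesis by simp
qed



lemma hbi_vec_prod:
  fixes g :: "'n::finite \<Rightarrow> real \<Rightarrow> real"
  assumes [measurable]: "\<And>j. g j \<in> borel_measurable borel"
    and nn: "\<And>j t. 0 \<le> g j t"
    and I: "\<And>j. (\<integral>\<^sup>+t. ennreal (g j t) \<partial>lborel) = ennreal (a j)"
    and a: "\<And>j. 0 \<le> a j"
  shows "has_bochner_integral (lborel :: (real^'n) measure) (\<lambda>x. \<Prod>j\<in>UNIV. g j (x $ j)) (\<Prod>j\<in>UNIV. a j)"
proof (rule has_bochner_integral_nn_integral)
  show "(\<lambda>x. \<Prod>j\<in>UNIV. g j (x $ j)) \<in> borel_measurable (lborel :: (real^'n) measure)"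
    by measurable
  show "AE x in lborel. 0 \<le> (\<Prod>j\<in>UNIV. g j (x $ j))" by (simp add: nn prod_nonneg)
  show "0 \<le> (\<Prod>j\<in>UNIV. a j)" by (simp add: a prod_nonneg)
  have "(\<integral>\<^sup>+x. ennreal (\<Prod>j\<in>UNIV. g j (x $ j)) \<partial>(lborel :: (real^'n) measure))
      = (\<integral>\<^sup>+x. (\<Prod>j\<in>UNIV. ennreal (g j (x $ j))) \<partial>lborel)"
    by (simp add: prod_ennreal nn)
  also have "\<dots> = (\<Prod>j\<in>UNIV. (\<integral>\<^sup>+t. ennreal (g j t) \<partial>lborel))"
    by (rule nn_integral_vec_prod) measurable
  also have "\<dots> = ennreal (\<Prod>j\<in>UNIV. a j)" by (simp add: I prod_ennreal a)
  finally show "(\<integral>\<^sup>+x. ennreal (\<Prod>j\<in>UNIV. g j (x $ j)) \<partial>(lborel :: (real^'n) measure)) = ennreal (\<Prod>j\<in>UNIV. a j)" .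
qed

lemma erl0: "0 < l \<Longrightarrow> (\<integral>\<^sup>+t. ennreal (erlang_density 0 l t) \<partial>lborel) = ennreal 1"
  using nn_integral_erlang_ith_moment[of l 0 0] by simp

lemma erl1: "0 < l \<Longrightarrow> (\<integral>\<^sup>+t. ennreal (erlang_density 0 l t * t) \<partial>lborel) = ennreal (1/l)"
  using nn_integral_erlang_ith_moment[of l 0 1] by (simp add: divide_ennreal)

lemma erl_nn: "0 < l \<Longrightarrow> 0 \<le> erlang_density 0 l t"
  by (simp add: erlang_density_def)

lemma lap1: "(\<integral>\<^sup>+t. ennreal (indicator {0..} t * exp (-(c*t))) \<partial>lborel) = (if 0 < c then ennreal (1/c) else \<infinity>)"
proof (cases "0 < c")
  case True
  have "(\<integral>\<^sup>+t. ennreal (indicator {0..} t * exp (-(c*t))) \<partial>lborel) = (\<integral>\<^sup>+t. ennreal (1/c) * ennreal (erlang_density 0 c t) \<partial>lborel)"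
    using True by (intro nn_integral_cong) (auto simp: erlang_density_def ennreal_mult'[symmetric] split: split_indicator)
  also have "\<dots> = ennreal (1/c) * (\<integral>\<^sup>+t. ennreal (erlang_density 0 c t) \<partial>lborel)"
    by (rule nn_integral_cmult) measurable
  also have "\<dots> = ennreal (1/c)" using erl0[OF True] by simp
  finally show ?thesis using True by simp
next
  case False
  have "(\<integral>\<^sup>+t. indicator {0..} (t::real) \<partial>lborel) \<le> (\<integral>\<^sup>+t. ennreal (indicator {0..} t * exp (-(c*t))) \<partial>(lborel::real measure))"
  proof (intro nn_integral_mono)
    fix t :: real
    show "indicator {0..} t \<le> ennreal (indicator {0..} t * exp (-(c*t)))"
    proof (cases "0 \<le> t")
      case True
      have "0 \<le> -(c*t)" using False True by (simp add: mult_nonpos_nonneg)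
      then have "1 \<le> exp (-(c*t))" by simp
      then show ?thesis using True by (simp add: indicator_def)
    qed simp
  qed
  moreover have "(\<integral>\<^sup>+t. indicator {0..} (t::real) \<partial>lborel) = (\<infinity>::ennreal)"
  proof -
    have "emeasure lborel {0::real..} = top"
    proof (cases "emeasure lborel {0::real..}" rule: ennreal_cases)
      case (real r)
      have "emeasure lborel {0::real..r+1} \<le> emeasure lborel {0::real..}"
        by (rule emeasure_mono) auto
      then have "ennreal (r+1) \<le> ennreal r" using real by simp
      then show ?thesis using real by (simp add: ennreal_le_iff)
    qed simp
    then show ?thesis by simp
  qed
  ultimately show ?thesis using False by (simp add: top_unique)
qed



definition invv :: "real^'n \<Rightarrow> real^'n" where "invv w = (\<chi> j. 1 / w $ j)"

lemma sum_cond_iff: "(\<forall>l. (\<Sum>j\<in>UNIV. A $ l $ j / w $ j) = b $ l) \<longleftrightarrow> A *v invv w = b"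
  by (simp add: vec_eq_iff matrix_vector_mult_def invv_def divide_inverse)

lemma exp_density_prod:
  assumes wpos: "\<forall>j. 0 < w $ j"
  shows "exp_density w x = (\<Prod>j\<in>UNIV. erlang_density 0 (w $ j) (x $ j))"
proof (cases "x \<in> orthant")
  case True
  then have "\<forall>j. 0 \<le> x $ j" by (simp add: orthant_def)
  then have "(\<Prod>j\<in>UNIV. erlang_density 0 (w $ j) (x $ j)) = (\<Prod>j\<in>UNIV. w $ j * exp (- (w $ j * x $ j)))"
    by (intro prod.cong) (auto simp: erlang_density_def not_less[symmetric])
  also have "\<dots> = (\<Prod>j\<in>UNIV. w $ j) * exp (- (\<Sum>j\<in>UNIV. w $ j * x $ j))"
    by (simp add: prod.distrib exp_sum[symmetric] sum_negf)
  finally show ?thesis using True by (simp add: exp_density_def)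
next
  case False
  then obtain j where "x $ j < 0" by (auto simp: orthant_def not_le)
  then have "erlang_density 0 (w $ j) (x $ j) = 0" by (simp add: erlang_density_def)
  then have "(\<Prod>j\<in>UNIV. erlang_density 0 (w $ j) (x $ j)) = 0"
    by (meson UNIV_I finite prod_zero)
  then show ?thesis using False by (simp add: exp_density_def)
qed

lemma hb_p0:
  assumes wpos: "\<forall>j. 0 < w $ j"
  shows "has_bochner_integral lborel (exp_density (w::real^'n)) 1"
proof -
  have "has_bochner_integral (lborel :: (real^'n) measure) (\<lambda>x. \<Prod>j\<in>UNIV. erlang_density 0 (w $ j) (x $ j)) (\<Prod>j\<in>(UNIV::'n set). 1)"
  proof (rule hbi_vec_prod[where g="\<lambda>j. erlang_density 0 (w $ j)" and a="\<lambda>j. 1"])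
    show "(\<integral>\<^sup>+t. ennreal (erlang_density 0 (w $ j) t) \<partial>lborel) = ennreal 1" for j
      using wpos erl0 by blast
    show "0 \<le> erlang_density 0 (w $ j) t" for j t using wpos erl_nn by blast
  qed auto
  then show ?thesis by (simp add: exp_density_prod[OF wpos, abs_def])
qed

lemma hb_p1:
  assumes wpos: "\<forall>j. 0 < w $ j"
  shows "has_bochner_integral lborel (\<lambda>x. exp_density (w::real^'n) x * x $ k) (1 / w $ k)"
proof -
  define g where "g i t = erlang_density 0 (w $ i) t * (if i = k then t else 1)" for i t
  define a where "a i = (if i = k then 1 / w $ i else 1)" for i
  have "has_bochner_integral (lborel :: (real^'n) measure) (\<lambda>x. \<Prod>j\<in>UNIV. g j (x $ j)) (\<Prod>j\<in>UNIV. a j)"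
  proof (rule hbi_vec_prod)
    show "g j \<in> borel_measurable borel" for j unfolding g_def by measurable
    show "0 \<le> g j t" for j t using wpos by (auto simp: g_def erlang_density_def less_imp_le intro!: mult_nonneg_nonneg)
    show "0 \<le> a j" for j using wpos by (auto simp: a_def less_imp_le)
    show "(\<integral>\<^sup>+t. ennreal (g j t) \<partial>lborel) = ennreal (a j)" for j
      using wpos erl0 erl1 by (auto simp: g_def a_def)
  qed
  moreover have "(\<Prod>j\<in>UNIV. g j (x $ j)) = exp_density w x * x $ k" for x
    by (simp add: g_def exp_density_prod[OF wpos] prod.distrib prod.delta)
  moreover have "(\<Prod>j\<in>UNIV. a j) = 1 / w $ k" by (simp add: a_def prod.delta)
  ultimately show ?thesis by simp
qed

lemma gibbs_pt:
  fixes y q :: real assumes "0 \<le> y"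
  shows "y * q + y - exp q \<le> y * ln y"
proof (cases "y = 0")
  case False
  then have y: "0 < y" using assms by simp
  have "ln (exp q / y) \<le> exp q / y - 1" by (rule ln_le_minus_one) (use y in simp)
  then have "q - ln y \<le> exp q / y - 1" using y by (simp add: ln_div)
  then have "y * (q - ln y) \<le> y * (exp q / y - 1)" using y by (simp add: mult_left_mono)
  then show ?thesis using y by (simp add: algebra_simps)
qed simp



lemma hb_lin:
  fixes f :: "real^'n \<Rightarrow> real"
  assumes h0: "has_bochner_integral lborel f 1"
    and h1: "\<And>j. has_bochner_integral lborel (\<lambda>x. f x * x $ j) (\<mu> $ j)"
  shows "has_bochner_integral lborel (\<lambda>x. S * f x - (\<Sum>j\<in>UNIV. w $ j * (f x * x $ j))) (S - w \<bullet> \<mu>)"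
proof -
  have "has_bochner_integral lborel (\<lambda>x. S * f x - (\<Sum>j\<in>UNIV. w $ j * (f x * x $ j))) (S * 1 - (\<Sum>j\<in>UNIV. w $ j * \<mu> $ j))"
    by (intro has_bochner_integral_diff has_bochner_integral_mult_right has_bochner_integral_sum h0 h1)
  then show ?thesis by (simp add: inner_vec_def)
qed

lemma p_exp_q:
  assumes wpos: "\<forall>j. 0 < w $ j" and x: "x \<in> orthant"
  shows "exp_density w x = exp ((\<Sum>j\<in>UNIV. ln (w $ j)) - (\<Sum>j\<in>UNIV. w $ j * x $ j))"
proof -
  have "(\<Prod>j\<in>UNIV. w $ j) = exp (\<Sum>j\<in>UNIV. ln (w $ j))"
    using wpos by (simp add: exp_sum)
  then show ?thesis using x by (simp add: exp_density_def exp_diff exp_minus divide_inverse)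
qed

lemma p_off: "x \<notin> orthant \<Longrightarrow> exp_density w x = 0"
  by (simp add: exp_density_def)

lemma p_nonneg: "\<forall>j. 0 < w $ j \<Longrightarrow> 0 \<le> exp_density w x"
  by (simp add: exp_density_def prod_nonneg less_imp_le)

lemma pq:
  assumes wpos: "\<forall>j. 0 < w $ j"
  shows "exp_density w x * ln (exp_density w x) =
     (\<Sum>j\<in>UNIV. ln (w $ j)) * exp_density w x - (\<Sum>j\<in>UNIV. w $ j * (exp_density w x * x $ j))"
proof (cases "x \<in> orthant")
  case True
  show ?thesis
    by (simp only: p_exp_q[OF wpos True] ln_exp) (simp add: algebra_simps sum_distrib_left sum_distrib_right)
qed (simp add: p_off)

lemma entropy_part:
  fixes A :: "real^'n^'m" and w :: "real^'n"
  assumes wpos: "\<forall>j. 0 < w $ j" and Aw: "A *v invv w = b" and wL: "w = transpose A *v L0"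
  shows "orthant_prob_density (exp_density w) \<and> mean_exists (exp_density w) \<and>
             mean_vec (exp_density w) \<in> Kset A b \<and>
           (\<forall>f. orthant_prob_density f \<and> mean_exists f \<and> mean_vec f \<in> Kset A b \<longrightarrow>
              dens_entropy f \<le> dens_entropy (exp_density w))"
proof -
  let ?p = "exp_density w"
  let ?S = "\<Sum>j\<in>UNIV. ln (w $ j)"
  have h0: "has_bochner_integral lborel ?p 1" by (rule hb_p0[OF wpos])
  have h1: "has_bochner_integral lborel (\<lambda>x. ?p x * x $ j) (invv w $ j)" for j
    using hb_p1[OF wpos] by (simp add: invv_def)
  have keyid: "w \<bullet> \<mu> = real CARD('n)" if "A *v \<mu> = b" for \<mu>
  proof -
    have "w \<bullet> \<mu> = L0 \<bullet> (A *v \<mu>)" by (simp add: wL inner_Ax)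
    also have "\<dots> = L0 \<bullet> (A *v invv w)" using that Aw by simp
    also have "\<dots> = w \<bullet> invv w" by (simp add: wL inner_Ax)
    also have "\<dots> = (\<Sum>j\<in>(UNIV::'n set). 1)"
      unfolding inner_vec_def invv_def using wpos by (intro sum.cong) (auto, metis less_irrefl)
    finally show ?thesis by simp
  qed
  have meanp: "mean_vec ?p = invv w"
    using h1 by (simp add: mean_vec_def vec_eq_iff has_bochner_integral_integral_eq)
  have pdens: "orthant_prob_density ?p"
    unfolding orthant_prob_density_def
    using h0 p_nonneg[OF wpos] p_off
    by (auto simp: has_bochner_integral_iff)
  have pmean: "mean_exists ?p" using h1 by (auto simp: mean_exists_def has_bochner_integral_iff)
  have pK: "mean_vec ?p \<in> Kset A b" using meanp Aw wpos
    by (auto simp: Kset_def invv_def less_imp_le)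
  have hpl: "has_bochner_integral lborel (\<lambda>x. ?p x * ln (?p x)) (?S - real CARD('n))"
  proof -
    have "has_bochner_integral lborel (\<lambda>x. ?S * ?p x - (\<Sum>j\<in>UNIV. w $ j * (?p x * x $ j))) (?S - w \<bullet> invv w)"
      by (rule hb_lin[OF h0 h1])
    then show ?thesis using keyid[OF Aw] pq[OF wpos] by simp
  qed
  have entp: "dens_entropy ?p = ereal (- (?S - real CARD('n)))"
    using hpl by (simp add: dens_entropy_def has_bochner_integral_iff)
  have "dens_entropy f \<le> dens_entropy ?p"
    if f: "orthant_prob_density f" "mean_exists f" "mean_vec f \<in> Kset A b" for f
  proof (cases "integrable lborel (\<lambda>x. f x * ln (f x))")
    case False
    then show ?thesis by (simp add: dens_entropy_def)
  next
    case True
    let ?\<mu> = "mean_vec f"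
    have fA: "A *v ?\<mu> = b" using f(3) by (simp add: Kset_def)
    have f0: "has_bochner_integral lborel f 1" using f(1)
      by (simp add: orthant_prob_density_def has_bochner_integral_iff)
    have f1: "has_bochner_integral lborel (\<lambda>x. f x * x $ j) (?\<mu> $ j)" for j
      using f(2) by (simp add: mean_exists_def mean_vec_def has_bochner_integral_iff)
    have hl: "has_bochner_integral lborel (\<lambda>x. ?S * f x - (\<Sum>j\<in>UNIV. w $ j * (f x * x $ j))) (?S - real CARD('n))"
      using hb_lin[OF f0 f1, of ?S w] keyid[OF fA] by simp
    have hl2: "has_bochner_integral lborel (\<lambda>x. (?S * f x - (\<Sum>j\<in>UNIV. w $ j * (f x * x $ j))) + f x - ?p x) (?S - real CARD('n) + 1 - 1)"
      by (intro has_bochner_integral_diff has_bochner_integral_add hl f0 h0)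
    have ae: "AE x in lborel. (?S * f x - (\<Sum>j\<in>UNIV. w $ j * (f x * x $ j))) + f x - ?p x \<le> f x * ln (f x)"
    proof -
      have a1: "AE x in lborel. 0 \<le> f x" and a2: "AE x in lborel. x \<notin> orthant \<longrightarrow> f x = 0"
        using f(1) by (auto simp: orthant_prob_density_def)
      from a1 a2 show ?thesis
    proof eventually_elim
      case (elim x)
      show ?case
      proof (cases "x \<in> orthant")
        case True
        have "f x * (?S - (\<Sum>j\<in>UNIV. w $ j * x $ j)) + f x - exp (?S - (\<Sum>j\<in>UNIV. w $ j * x $ j)) \<le> f x * ln (f x)"
          by (rule gibbs_pt) (use elim in simp)
        then show ?thesis using p_exp_q[OF wpos True]
          by (simp add: algebra_simps sum_distrib_left)
      next
        case False
        then show ?thesis using elim p_off[OF False] by simp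
      qed
    qed
    qed
    have "?S - real CARD('n) + 1 - 1 \<le> integral\<^sup>L lborel (\<lambda>x. f x * ln (f x))"
      using integral_mono_AE[OF _ True ae] hl2 by (simp add: has_bochner_integral_iff)
    then show ?thesis using True entp by (simp add: dens_entropy_def)
  qed
  then show ?thesis using pdens pmean pK by blast
qed



lemma laplace_part:
  fixes A :: "real^'n^'m" and L :: "real^'m"
  shows "(\<integral>\<^sup>+ x. indicator orthant x * ennreal (exp (- (L \<bullet> (A *v x)))) \<partial>lborel) =
           (if \<forall>j. 0 < (transpose A *v L) $ j
            then ennreal (\<Prod>j\<in>UNIV. 1 / (transpose A *v L) $ j) else \<infinity>)"
proof -
  define c where "c = transpose A *v L"
  have pt: "indicator orthant x * ennreal (exp (- (L \<bullet> (A *v x)))) =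
      (\<Prod>j\<in>UNIV. ennreal (indicator {0..} (x $ j) * exp (- (c $ j * x $ j))))" for x :: "real^'n"
  proof -
    have i: "(\<Prod>j\<in>UNIV. indicator {0..} (x $ j) :: real) = indicator orthant x"
    proof (cases "x \<in> orthant")
      case True then show ?thesis by (simp add: orthant_def indicator_def)
    next
      case False
      then obtain j where "x $ j < 0" by (auto simp: orthant_def not_le)
      then have "indicator {0..} (x $ j) = (0::real)" by simp
      then have "(\<Prod>j\<in>UNIV. indicator {0..} (x $ j) :: real) = 0"
        by (meson UNIV_I finite prod_zero)
      then show ?thesis using False by simp
    qed
    have e: "(\<Prod>j\<in>UNIV. exp (- (c $ j * x $ j))) = exp (- (L \<bullet> (A *v x)))"
      by (simp only: inner_Ax) (simp add: exp_sum[symmetric] sum_negf c_def inner_vec_def)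
    have "(\<Prod>j\<in>UNIV. ennreal (indicator {0..} (x $ j) * exp (- (c $ j * x $ j))))
        = ennreal (\<Prod>j\<in>UNIV. indicator {0..} (x $ j) * exp (- (c $ j * x $ j)))"
      by (rule prod_ennreal) simp
    also have "\<dots> = ennreal (indicator orthant x * exp (- (L \<bullet> (A *v x))))"
      by (simp add: prod.distrib i e)
    also have "\<dots> = indicator orthant x * ennreal (exp (- (L \<bullet> (A *v x))))"
      by (simp add: indicator_def)
    finally show ?thesis by simp
  qed
  have "(\<integral>\<^sup>+ x. indicator orthant x * ennreal (exp (- (L \<bullet> (A *v x)))) \<partial>lborel)
     = (\<integral>\<^sup>+ x. (\<Prod>j\<in>UNIV. ennreal (indicator {0..} (x $ j) * exp (- (c $ j * x $ j)))) \<partial>(lborel :: (real^'n) measure))"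
    by (simp add: pt)
  also have "\<dots> = (\<Prod>j\<in>UNIV. (\<integral>\<^sup>+t. ennreal (indicator {0..} t * exp (- (c $ j * t))) \<partial>lborel))"
    by (rule nn_integral_vec_prod) measurable
  also have "\<dots> = (\<Prod>j\<in>UNIV. (if 0 < c $ j then ennreal (1 / c $ j) else \<infinity>))"
    by (simp add: lap1)
  also have "\<dots> = (if \<forall>j. 0 < c $ j then ennreal (\<Prod>j\<in>UNIV. 1 / c $ j) else \<infinity>)"
  proof (cases "\<forall>j. 0 < c $ j")
    case True
    then show ?thesis by (simp add: prod_ennreal less_imp_le)
  next
    case False
    have "(\<Prod>j\<in>UNIV. (if 0 < c $ j then ennreal (1 / c $ j) else \<infinity>)) = top"
      unfolding ennreal_prod_eq_top using False by auto
    then show ?thesis using False by simp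
  qed
  finally show ?thesis by (simp add: c_def)
qed

lemma convex_part:
  fixes A :: "real^'n^'m" and b :: "real^'m"
  shows "convex {L :: real^'m. \<forall>j. 0 < (transpose A *v L) $ j} \<and>
         convex_on {L. \<forall>j. 0 < (transpose A *v L) $ j} (\<lambda>L. real_of_ereal (Hn A b L))"
proof -
  let ?D = "{L :: real^'m. \<forall>j. 0 < (transpose A *v L) $ j}"
  have lin: "transpose A *v (u *\<^sub>R x + v *\<^sub>R y) = u *\<^sub>R (transpose A *v x) + v *\<^sub>R (transpose A *v y)" for u v x y
    by (simp add: algebra_simps)
  have cvx: "convex ?D"
    unfolding convex_def
  proof (intro ballI allI impI)
    fix x y :: "real^'m" and u v :: real
    assume x: "x \<in> ?D" and y: "y \<in> ?D" and uv: "0 \<le> u" "0 \<le> v" "u + v = 1"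
    show "u *\<^sub>R x + v *\<^sub>R y \<in> ?D"
      unfolding mem_Collect_eq lin
    proof
      fix j
      have a: "0 < (transpose A *v x) $ j" "0 < (transpose A *v y) $ j" using x y by auto
      have "0 < u * (transpose A *v x) $ j + v * (transpose A *v y) $ j"
      proof (cases "u = 0")
        case True then show ?thesis using uv a by simp
      next
        case False
        then have "0 < u * (transpose A *v x) $ j" using uv a by simp
        moreover have "0 \<le> v * (transpose A *v y) $ j" using uv a by simp
        ultimately show ?thesis by linarith
      qed
      then show "0 < (u *\<^sub>R (transpose A *v x) + v *\<^sub>R (transpose A *v y)) $ j" by simp
    qed
  qed
  have val: "real_of_ereal (Hn A b L) = - (\<Sum>j\<in>UNIV. ln ((transpose A *v L) $ j)) + L \<bullet> b" if "L \<in> ?D" for L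
    using that by (simp add: Hn_def)
  have "convex_on ?D (\<lambda>L. real_of_ereal (Hn A b L))"
  proof (rule convex_onI[OF _ cvx])
    fix t :: real and x y assume t: "0 < t" "t < 1" and x: "x \<in> ?D" and y: "y \<in> ?D"
    have z: "(1 - t) *\<^sub>R x + t *\<^sub>R y \<in> ?D" using cvx x y t by (simp add: convex_def)
    have lnc: "(1 - t) * ln ((transpose A *v x) $ j) + t * ln ((transpose A *v y) $ j)
        \<le> ln ((transpose A *v ((1 - t) *\<^sub>R x + t *\<^sub>R y)) $ j)" for j
    proof -
      have "(1 - t) * ln ((transpose A *v x) $ j) + t * ln ((transpose A *v y) $ j)
        \<le> ln ((1 - t) *\<^sub>R (transpose A *v x) $ j + t *\<^sub>R (transpose A *v y) $ j)"
        by (rule concave_onD[OF ln_concave]) (use t x y in auto)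
      then show ?thesis unfolding lin by simp
    qed
    have "(1 - t) * (\<Sum>j\<in>UNIV. ln ((transpose A *v x) $ j)) + t * (\<Sum>j\<in>UNIV. ln ((transpose A *v y) $ j))
        \<le> (\<Sum>j\<in>UNIV. ln ((transpose A *v ((1 - t) *\<^sub>R x + t *\<^sub>R y)) $ j))"
      using sum_mono[of UNIV, OF lnc] by (simp add: sum_distrib_left sum.distrib)
    moreover have "((1 - t) *\<^sub>R x + t *\<^sub>R y) \<bullet> b = (1 - t) * (x \<bullet> b) + t * (y \<bullet> b)"
      by (simp add: inner_add_left)
    moreover have "(1 - t) * (- (\<Sum>j\<in>UNIV. ln ((transpose A *v x) $ j)) + x \<bullet> b) + t * (- (\<Sum>j\<in>UNIV. ln ((transpose A *v y) $ j)) + y \<bullet> b)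
       = - ((1 - t) * (\<Sum>j\<in>UNIV. ln ((transpose A *v x) $ j)) + t * (\<Sum>j\<in>UNIV. ln ((transpose A *v y) $ j))) + ((1 - t) * (x \<bullet> b) + t * (y \<bullet> b))"
      by (simp only: algebra_simps)
    ultimately show "real_of_ereal (Hn A b ((1 - t) *\<^sub>R x + t *\<^sub>R y)) \<le> (1 - t) * real_of_ereal (Hn A b x) + t * real_of_ereal (Hn A b y)"
      unfolding val[OF z] val[OF x] val[OF y] by linarith
  qed
  with cvx show ?thesis by blast
qed



lemma rowspan_range:
  fixes A :: "real^'n^'m"
  shows "w \<in> span (rows A) \<longleftrightarrow> (\<exists>L. w = transpose A *v L)"
proof
  assume "w \<in> span (rows A)"
  moreover have "span (rows A) \<subseteq> range (\<lambda>L. transpose A *v L)"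
  proof (rule span_minimal)
    show "rows A \<subseteq> range (\<lambda>L. transpose A *v L)"
      using columns_image_basis[of "transpose A"] by auto
    show "subspace (range (\<lambda>L. transpose A *v L))"
      by (rule linear_subspace_image[OF matrix_vector_mul_linear subspace_UNIV])
  qed
  ultimately show "\<exists>L. w = transpose A *v L" by auto
next
  assume "\<exists>L. w = transpose A *v L"
  then show "w \<in> span (rows A)"
    using matrix_vector_mult_in_columnspace[of "transpose A"] by auto
qed

lemma inj_T:
  fixes A :: "real^'n^'m"
  assumes "rank A = CARD('m)"
  shows "inj (\<lambda>L. transpose A *v L)"
proof -
  have "inj ((*v) (transpose A))" using full_rank_injective[of "transpose A"] assms rank_transpose[of A] by simp
  then show ?thesis by (simp only: inj_on_def)
qed

lemma ln_strict: fixes y :: real assumes "0 < y" "y \<noteq> 1" shows "ln y < y - 1"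
proof -
  have s: "0 < sqrt y" using assms by simp
  have "ln (sqrt y) \<le> sqrt y - 1" by (rule ln_le_minus_one[OF s])
  moreover have "ln (sqrt y) = ln y / 2" using assms by (simp add: ln_sqrt)
  moreover have "sqrt y \<noteq> 1" using assms by simp
  then have "0 < (sqrt y - 1)^2" by simp
  moreover have "(sqrt y)^2 = y" using assms by simp
  ultimately show ?thesis by (simp add: power2_eq_square algebra_simps)
qed

lemma term_ge: fixes c w :: real assumes "0 < c" "0 < w" shows "0 \<le> c / w - ln c - (1 - ln w)"
proof -
  have "ln (c / w) \<le> c / w - 1" by (rule ln_le_minus_one) (use assms in simp)
  then show ?thesis using assms by (simp add: ln_div)
qed

lemma term_eq: fixes c w :: real assumes "0 < c" "0 < w" "c / w - ln c - (1 - ln w) = 0" shows "c = w"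
proof (rule ccontr)
  assume "c \<noteq> w"
  then have "c / w \<noteq> 1" using assms by simp
  then have "ln (c / w) < c / w - 1" by (intro ln_strict) (use assms in simp_all)
  then show False using assms by (simp add: ln_div)
qed

lemma Hn_part:
  fixes A :: "real^'n^'m" and w :: "real^'n"
  assumes wpos: "\<forall>j. 0 < w $ j" and Aw: "A *v invv w = b" and wL: "w = transpose A *v L0"
    and inj: "inj (\<lambda>L. transpose A *v L)"
  shows "(\<forall>L. Hn A b L0 \<le> Hn A b L) \<and> (\<forall>L'. (\<forall>L. Hn A b L' \<le> Hn A b L) \<longrightarrow> L' = L0)"
proof -
  define g where "g j y = y / w $ j - ln y - (1 - ln (w $ j))" for j y
  have HnD: "Hn A b L = ereal (\<Sum>j\<in>UNIV. (transpose A *v L) $ j / w $ j - ln ((transpose A *v L) $ j))"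
    if "\<forall>j. 0 < (transpose A *v L) $ j" for L
  proof -
    have "L \<bullet> b = L \<bullet> (A *v invv w)" using Aw by simp
    also have "\<dots> = (transpose A *v L) \<bullet> invv w" by (rule inner_Ax)
    also have "\<dots> = (\<Sum>j\<in>UNIV. (transpose A *v L) $ j / w $ j)"
      by (simp add: inner_vec_def invv_def divide_inverse)
    finally show ?thesis using that by (simp add: Hn_def sum_subtractf)
  qed
  have Hn0: "Hn A b L0 = ereal (\<Sum>j\<in>UNIV. 1 - ln (w $ j))"
  proof -
    have "Hn A b L0 = ereal (\<Sum>j\<in>UNIV. w $ j / w $ j - ln (w $ j))"
      using HnD[of L0] wpos wL by simp
    also have "\<dots> = ereal (\<Sum>j\<in>UNIV. 1 - ln (w $ j))"
      using wpos by (intro arg_cong[where f=ereal] sum.cong) (auto, metis less_irrefl)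
    finally show ?thesis .
  qed
  have diff: "Hn A b L = ereal ((\<Sum>j\<in>UNIV. 1 - ln (w $ j)) + (\<Sum>j\<in>UNIV. g j ((transpose A *v L) $ j)))"
    if "\<forall>j. 0 < (transpose A *v L) $ j" for L
    using HnD[OF that] by (simp add: g_def sum.distrib sum_subtractf)
  have gnn: "0 \<le> g j ((transpose A *v L) $ j)" if "\<forall>j. 0 < (transpose A *v L) $ j" for L j
    unfolding g_def using term_ge that wpos by blast
  have le: "Hn A b L0 \<le> Hn A b L" for L
  proof (cases "\<forall>j. 0 < (transpose A *v L) $ j")
    case True
    have "0 \<le> (\<Sum>j\<in>UNIV. g j ((transpose A *v L) $ j))" using gnn[OF True] by (simp add: sum_nonneg)
    then show ?thesis using diff[OF True] Hn0 by simp
  next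
    case False
    then have "Hn A b L = \<infinity>" unfolding Hn_def by auto
    then show ?thesis by simp
  qed
  have uniq: "L' = L0" if m: "\<forall>L. Hn A b L' \<le> Hn A b L" for L'
  proof -
    have "Hn A b L' \<le> Hn A b L0" using m by simp
    then have D: "\<forall>j. 0 < (transpose A *v L') $ j" using Hn0 by (auto simp: Hn_def split: if_splits)
    have "(\<Sum>j\<in>UNIV. g j ((transpose A *v L') $ j)) \<le> 0"
      using m[rule_format, of L0] diff[OF D] Hn0 by simp
    then have "(\<Sum>j\<in>UNIV. g j ((transpose A *v L') $ j)) = 0"
      using gnn[OF D] by (simp add: sum_nonneg antisym)
    then have "\<forall>j\<in>UNIV. g j ((transpose A *v L') $ j) = 0"
      using gnn[OF D] by (subst sum_nonneg_eq_0_iff[symmetric]) auto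
    then have "(transpose A *v L') $ j = w $ j" for j
      using term_eq D wpos unfolding g_def by blast
    then have "transpose A *v L' = transpose A *v L0" using wL by (simp add: vec_eq_iff)
    then show ?thesis using inj by (simp add: inj_on_def)
  qed
  show ?thesis using le uniq by blast
qed

lemma w_unique:
  fixes A :: "real^'n^'m"
  assumes p1: "\<forall>j. 0 < w1 $ j" and p2: "\<forall>j. 0 < w2 $ j"
    and s1: "w1 \<in> span (rows A)" and s2: "w2 \<in> span (rows A)"
    and a1: "A *v invv w1 = b" and a2: "A *v invv w2 = b"
  shows "w1 = w2"
proof -
  have "A *v (invv w1 - invv w2) = 0" using a1 a2 by (simp add: matrix_vector_mult_diff_distrib)
  moreover have "w1 - w2 \<in> span (rows A)" using s1 s2 by (rule span_diff)
  ultimately have "orthogonal (invv w1 - invv w2) (w1 - w2)" by (rule orthogonal_nullspace_rowspace)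
  then have "(\<Sum>j\<in>UNIV. (1 / w1 $ j - 1 / w2 $ j) * (w1 $ j - w2 $ j)) = 0"
    by (simp add: orthogonal_def inner_vec_def invv_def)
  moreover have t: "(1 / w1 $ j - 1 / w2 $ j) * (w1 $ j - w2 $ j) = - ((w1 $ j - w2 $ j)^2 / (w1 $ j * w2 $ j))" for j
  proof -
    have "w1 $ j \<noteq> 0" "w2 $ j \<noteq> 0" using p1 p2 by (metis less_irrefl)+
    then show ?thesis by (simp add: divide_simps power2_eq_square) algebra
  qed
  ultimately have "(\<Sum>j\<in>UNIV. (w1 $ j - w2 $ j)^2 / (w1 $ j * w2 $ j)) = 0"
    by (simp add: sum_negf)
  then have "\<forall>j\<in>UNIV. (w1 $ j - w2 $ j)^2 / (w1 $ j * w2 $ j) = 0"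
    using p1 p2 by (subst sum_nonneg_eq_0_iff[symmetric]) (auto intro!: divide_nonneg_pos)
  then show ?thesis using p1 p2 by (auto simp: vec_eq_iff) (metis less_irrefl)
qed



lemma neg_coord_witness:
  fixes a :: "real^'n"
  assumes P: "\<forall>p. (\<forall>i. 0 < p $ i) \<longrightarrow> 0 \<le> a \<bullet> p"
  shows "0 \<le> a $ j"
proof (rule ccontr)
  assume neg: "\<not> 0 \<le> a $ j"
  define s where "s = (\<Sum>i\<in>UNIV. a $ i)"
  define t where "t = - a $ j / (2 * (\<bar>s\<bar> - a $ j))"
  have den: "0 < \<bar>s\<bar> - a $ j" using neg by simp
  have tpos: "0 < t" unfolding t_def using neg den by (intro divide_pos_pos) auto
  define p where "p = (\<chi> i. if i = j then 1 else t)"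
  have "\<forall>i. 0 < p $ i" using tpos by (simp add: p_def)
  then have ge: "0 \<le> a \<bullet> p" using P by blast
  have "a \<bullet> p = (\<Sum>i\<in>UNIV. a $ i * t + (if i = j then a $ i * (1 - t) else 0))"
    unfolding inner_vec_def p_def by (intro sum.cong) (auto simp: algebra_simps)
  also have "\<dots> = t * s + a $ j * (1 - t)"
    by (simp add: sum.distrib s_def sum_distrib_left mult.commute)
  also have "\<dots> = a $ j + t * (s - a $ j)" by (simp add: algebra_simps)
  also have "\<dots> \<le> a $ j + t * (\<bar>s\<bar> - a $ j)"
    using tpos by (intro add_left_mono mult_left_mono) auto
  also have "t * (\<bar>s\<bar> - a $ j) = - a $ j / 2" unfolding t_def using den by (simp add: field_simps)
  finally have "a \<bullet> p \<le> a $ j / 2" by simp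
  then show False using ge neg by simp
qed

lemma gordan:
  fixes A :: "real^'n^'m"
  assumes Kcpt: "compact (Kset A b)" and x0K: "x0 \<in> Kset A b"
  shows "\<exists>L. \<forall>j. 0 < (transpose A *v L) $ j"
proof (rule ccontr)
  assume no: "\<not> (\<exists>L. \<forall>j. 0 < (transpose A *v L) $ j)"
  let ?V = "range (\<lambda>L. transpose A *v L)"
  let ?P = "{p :: real^'n. \<forall>i. 0 < p $ i}"
  have cV: "convex ?V"
    by (rule subspace_imp_convex, rule linear_subspace_image[OF matrix_vector_mul_linear subspace_UNIV])
  have cP: "convex ?P"
    unfolding convex_def
  proof (intro ballI allI impI)
    fix x y :: "real^'n" and u v :: real
    assume x: "x \<in> ?P" and y: "y \<in> ?P" and uv: "0 \<le> u" "0 \<le> v" "u + v = 1"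
    show "u *\<^sub>R x + v *\<^sub>R y \<in> ?P"
    proof (clarify)
      fix i
      have a: "0 < x $ i" "0 < y $ i" using x y by auto
      have "0 < u * x $ i + v * y $ i"
      proof (cases "u = 0")
        case True then show ?thesis using uv a by simp
      next
        case False
        then have "0 < u * x $ i" using uv a by simp
        moreover have "0 \<le> v * y $ i" using uv a by simp
        ultimately show ?thesis by linarith
      qed
      then show "0 < (u *\<^sub>R x + v *\<^sub>R y) $ i" by simp
    qed
  qed
  have dis: "?V \<inter> ?P = {}" using no by auto
  have "((\<chi> i. 1) :: real^'n) \<in> ?P" by simp
  then have ne: "?V \<noteq> {}" "?P \<noteq> {}" by blast+
  obtain a \<beta> where a0: "a \<noteq> 0" and aV: "\<forall>x\<in>?V. a \<bullet> x \<le> \<beta>" and aP: "\<forall>x\<in>?P. \<beta> \<le> a \<bullet> x"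
    using separating_hyperplane_sets[OF cV cP ne dis] by blast
  have b0: "0 \<le> \<beta>" using aV[rule_format, of 0] by (metis matrix_vector_mult_0_right rangeI inner_zero_right)
  have orth: "a \<bullet> (transpose A *v L) = 0" for L
  proof (rule ccontr)
    assume nz: "a \<bullet> (transpose A *v L) \<noteq> 0"
    define t where "t = (\<beta> + 1) / (a \<bullet> (transpose A *v L))"
    have "a \<bullet> (transpose A *v (t *\<^sub>R L)) \<le> \<beta>" using aV by blast
    moreover have "a \<bullet> (transpose A *v (t *\<^sub>R L)) = \<beta> + 1"
      using nz by (simp add: matrix_vector_mult_scaleR t_def)
    ultimately show False by simp
  qed
  have Aa: "A *v a = 0"
  proof -
    have e: "(A *v a) \<bullet> (A *v a) = (transpose A *v (A *v a)) \<bullet> a" by (rule inner_Ax)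
    have "(A *v a) \<bullet> (A *v a) = 0"
      by (metis e inner_commute orth)
    then show ?thesis by simp
  qed
  have pp: "\<forall>p. (\<forall>i. 0 < p $ i) \<longrightarrow> 0 \<le> a \<bullet> p"
  proof (intro allI impI)
    fix p :: "real^'n" assume "\<forall>i. 0 < p $ i"
    then have "\<beta> \<le> a \<bullet> p" using aP by blast
    then show "0 \<le> a \<bullet> p" using b0 by linarith
  qed
  have anon: "0 \<le> a $ j" for j
    by (rule neg_coord_witness[OF pp])
  have x0: "\<forall>j. 0 \<le> x0 $ j" "A *v x0 = b" using x0K by (auto simp: Kset_def)
  have inK: "x0 + t *\<^sub>R a \<in> Kset A b" if "0 \<le> t" for t
    using x0 anon that Aa by (simp add: Kset_def matrix_vector_right_distrib matrix_vector_mult_scaleR)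
  obtain B where B: "\<forall>x\<in>Kset A b. norm x \<le> B"
    using compact_imp_bounded[OF Kcpt] by (auto simp: bounded_iff)
  define t where "t = (B + norm x0 + 1) / norm a"
  have na: "0 < norm a" using a0 by simp
  have Bnn: "0 \<le> B" using B x0K norm_ge_zero order_trans by blast
  have tnn: "0 \<le> t" unfolding t_def using Bnn na by (intro divide_nonneg_pos) auto
  have "norm (t *\<^sub>R a) \<le> norm (x0 + t *\<^sub>R a) + norm x0"
    using norm_triangle_ineq4[of "x0 + t *\<^sub>R a" x0] by simp
  also have "\<dots> \<le> B + norm x0" using B inK[OF tnn] by simp
  finally have "t * norm a \<le> B + norm x0" using tnn by simp
  then show False unfolding t_def using na by simp
qed



lemma exists_c:
  fixes T :: "real^'m^'n" and A :: "real^'n^'m" and B :: "real^'n^'m"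
  assumes Binv: "B ** T = mat 1" and adj: "\<And>v e. (T *v v) \<bullet> e = v \<bullet> (A *v e)"
    and x0pos: "\<forall>j. 0 < x0 $ j" and Ax0: "A *v x0 = b" and L1: "\<forall>j. 0 < (T *v L1) $ j"
  shows "\<exists>L. (\<forall>j. 0 < (T *v L) $ j) \<and> A *v invv (T *v L) = b"
proof -
  define \<phi> where "\<phi> j y = y * x0 $ j - ln y" for j y
  define F where "F L = (\<Sum>j\<in>UNIV. \<phi> j ((T *v L) $ j))" for L
  define m where "m j = 1 + ln (x0 $ j)" for j
  have phi_ge: "m j \<le> \<phi> j y" if "0 < y" for j y
  proof -
    have "ln (y * x0 $ j) \<le> y * x0 $ j - 1" by (rule ln_le_minus_one) (use that x0pos in simp)
    moreover have "x0 $ j \<noteq> 0" using x0pos by (metis less_irrefl)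
    ultimately show ?thesis using that x0pos by (simp add: m_def \<phi>_def ln_mult)
  qed
  define R where "R = F L1 - (\<Sum>j\<in>UNIV. m j)"
  have bound: "\<phi> k ((T *v L) $ k) \<le> R + m k" if D: "\<forall>j. 0 < (T *v L) $ j" and le: "F L \<le> F L1" for L k
  proof -
    have "\<phi> k ((T *v L) $ k) - m k \<le> (\<Sum>j\<in>UNIV. \<phi> j ((T *v L) $ j) - m j)"
      by (rule member_le_sum) (use phi_ge D in auto)
    also have "\<dots> = F L - (\<Sum>j\<in>UNIV. m j)" by (simp add: F_def sum_subtractf)
    finally show ?thesis using le by (simp add: R_def)
  qed
  define lo where "lo k = exp (- (R + m k))" for k
  define U where "U k = 2 * (R + m k + ln (2 / x0 $ k) - 1) / x0 $ k" for k
  have lower: "lo k \<le> y" if y: "0 < y" and b: "\<phi> k y \<le> R + m k" for k y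
  proof -
    have "0 < y * x0 $ k" using y x0pos by simp
    then have "- ln y \<le> R + m k" using b by (simp add: \<phi>_def)
    then have "exp (- (R + m k)) \<le> exp (ln y)" by simp
    then show ?thesis using y by (simp add: lo_def)
  qed
  have upper: "y \<le> U k" if y: "0 < y" and b: "\<phi> k y \<le> R + m k" for k y
  proof -
    have xk: "0 < x0 $ k" using x0pos by simp
    have "ln (y * x0 $ k / 2) \<le> y * x0 $ k / 2 - 1" by (rule ln_le_minus_one) (use y xk in simp)
    moreover have "ln (y * x0 $ k / 2) = ln y - ln (2 / x0 $ k)"
      using y xk by (simp add: ln_div ln_mult)
    ultimately have "ln y \<le> y * x0 $ k / 2 - 1 + ln (2 / x0 $ k)" by simp
    then have "y * x0 $ k / 2 \<le> R + m k + ln (2 / x0 $ k) - 1" using b by (simp add: \<phi>_def)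
    then have "y * x0 $ k \<le> 2 * (R + m k + ln (2 / x0 $ k) - 1)" by simp
    then show ?thesis unfolding U_def using xk by (simp add: pos_le_divide_eq)
  qed
  have lopos: "0 < lo k" for k by (simp add: lo_def)
  define S0 where "S0 = {L. \<forall>j. lo j \<le> (T *v L) $ j \<and> (T *v L) $ j \<le> U j}"
  have inS0: "L \<in> S0" if D: "\<forall>j. 0 < (T *v L) $ j" and le: "F L \<le> F L1" for L
    unfolding S0_def using lower upper bound[OF D le] D by blast
  have L1S0: "L1 \<in> S0" by (rule inS0[OF L1]) simp
  have S0D: "\<forall>j. 0 < (T *v L) $ j" if "L \<in> S0" for L
  proof
    fix j
    have "lo j \<le> (T *v L) $ j" using that unfolding S0_def by blast
    then show "0 < (T *v L) $ j" using lopos[of j] by linarith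
  qed
  have clS0: "closed S0"
    unfolding S0_def by (simp add: Collect_all_eq closed_INT closed_Collect_conj closed_Collect_le continuous_intros)
  have bdS0: "bounded S0"
  proof -
    have "S0 \<subseteq> (\<lambda>c. B *v c) ` cbox ((\<chi> j. lo j)) (\<chi> j. U j)"
    proof
      fix L assume L: "L \<in> S0"
      have "L = B *v (T *v L)" by (simp add: matrix_vector_mul_assoc Binv)
      moreover have "T *v L \<in> cbox ((\<chi> j. lo j)) (\<chi> j. U j)" using L by (simp add: S0_def mem_box_cart)
      ultimately show "L \<in> (\<lambda>c. B *v c) ` cbox ((\<chi> j. lo j)) (\<chi> j. U j)" by blast
    qed
    moreover have "compact ((\<lambda>c. B *v c) ` cbox ((\<chi> j. lo j)) (\<chi> j. U j))"
      by (intro compact_continuous_image continuous_intros compact_cbox)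
    ultimately show ?thesis using compact_imp_bounded bounded_subset by blast
  qed
  have cpt: "compact S0" using clS0 bdS0 by (simp add: compact_eq_bounded_closed)
  have cont: "continuous_on S0 F"
    unfolding F_def \<phi>_def
    by (intro continuous_intros) (metis S0D less_irrefl)
  obtain Ls where Ls: "Ls \<in> S0" and Lmin: "\<forall>L\<in>S0. F Ls \<le> F L"
    using continuous_attains_inf[OF cpt _ cont] L1S0 by blast
  have LsD: "\<forall>j. 0 < (T *v Ls) $ j" by (rule S0D[OF Ls])
  have glob: "F Ls \<le> F L" if D: "\<forall>j. 0 < (T *v L) $ j" for L
  proof (cases "F L \<le> F L1")
    case True then show ?thesis using Lmin inS0[OF D] by blast
  next
    case False then show ?thesis using Lmin L1S0 by force
  qed
  define c where "c = T *v Ls"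
  have stat: "(T *v v) \<bullet> (x0 - invv c) = 0" for v
  proof -
    define d where "d = T *v v"
    have cpos: "\<forall>j. 0 < c $ j" using LsD by (simp add: c_def)
    define \<delta> where "\<delta> = Min (range (\<lambda>j. c $ j / (\<bar>d $ j\<bar> + 1)))"
    have \<delta>pos: "0 < \<delta>" unfolding \<delta>_def using cpos
      by (subst Min_gr_iff) (auto intro!: divide_pos_pos)
    have \<delta>le: "\<delta> \<le> c $ j / (\<bar>d $ j\<bar> + 1)" for j unfolding \<delta>_def by (rule Min_le) auto
    define \<psi> where "\<psi> t = (\<Sum>j\<in>UNIV. (c $ j + t * d $ j) * x0 $ j - ln (c $ j + t * d $ j))" for t
    have \<psi>F: "\<psi> t = F (Ls + t *\<^sub>R v)" for t
      by (simp add: \<psi>_def F_def \<phi>_def c_def d_def matrix_vector_right_distrib matrix_vector_mult_scaleR)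
    have Dt: "\<forall>j. 0 < (T *v (Ls + t *\<^sub>R v)) $ j" if "\<bar>t\<bar> < \<delta>" for t
    proof
      fix j
      have "\<bar>t * d $ j\<bar> \<le> \<bar>t\<bar> * (\<bar>d $ j\<bar> + 1)" by (simp add: abs_mult mult_left_mono)
      also have "\<dots> < \<delta> * (\<bar>d $ j\<bar> + 1)"
        using that by (intro mult_strict_right_mono) auto
      also have "\<dots> \<le> c $ j" using \<delta>le[of j] by (simp add: pos_le_divide_eq)
      finally have "0 < c $ j + t * d $ j" by linarith
      then show "0 < (T *v (Ls + t *\<^sub>R v)) $ j"
        by (simp add: c_def d_def matrix_vector_right_distrib matrix_vector_mult_scaleR)
    qed
    have der: "(\<psi> has_real_derivative (\<Sum>j\<in>UNIV. d $ j * x0 $ j - d $ j / c $ j)) (at 0)"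
      unfolding \<psi>_def using cpos
      by (auto intro!: derivative_eq_intros simp: divide_inverse mult.commute)
    have "(\<Sum>j\<in>UNIV. d $ j * x0 $ j - d $ j / c $ j) = 0"
    proof (rule DERIV_local_min[OF der \<delta>pos], intro allI impI)
      fix y :: real assume "\<bar>0 - y\<bar> < \<delta>"
      then have "\<bar>y\<bar> < \<delta>" by simp
      then show "\<psi> 0 \<le> \<psi> y" using glob[OF Dt] \<psi>F by (simp add: c_def)
    qed
    then show ?thesis
      by (simp add: d_def[symmetric] inner_vec_def invv_def algebra_simps sum_subtractf divide_inverse)
  qed
  define e where "e = x0 - invv c"
  have "(A *v e) \<bullet> (A *v e) = 0" using stat[of "A *v e"] adj by (simp add: e_def)
  then have "A *v e = 0" by simp
  then have "A *v invv c = b" using Ax0 by (simp add: e_def matrix_vector_mult_diff_distrib)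
  then show ?thesis using LsD c_def by blast
qed


theorem proposition6p1:
  fixes A :: "real^'n^'m" and b :: "real^'m"
  assumes dims: "CARD('n) > CARD('m)"
    and rankA: "rank A = CARD('m)"
    and Kcpt: "compact (Kset A b)"
    and Kpos: "\<exists>x\<in>Kset A b. \<forall>j. 0 < x $ j"
  shows "(\<exists>!w :: real^'n. (\<forall>j. 0 < w $ j) \<and> w \<in> span (rows A) \<and>
            (\<forall>l. (\<Sum>j\<in>UNIV. A $ l $ j / w $ j) = b $ l)) \<and>
         (\<forall>w :: real^'n. (\<forall>j. 0 < w $ j) \<and> w \<in> span (rows A) \<and>
            (\<forall>l. (\<Sum>j\<in>UNIV. A $ l $ j / w $ j) = b $ l) \<longrightarrow>
          (orthant_prob_density (exp_density w) \<and> mean_exists (exp_density w) \<and>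
             mean_vec (exp_density w) \<in> Kset A b \<and>
           (\<forall>f. orthant_prob_density f \<and> mean_exists f \<and> mean_vec f \<in> Kset A b \<longrightarrow>
              dens_entropy f \<le> dens_entropy (exp_density w))) \<and>
          (\<exists>\<Lambda>0. (\<forall>\<Lambda>. Hn A b \<Lambda>0 \<le> Hn A b \<Lambda>) \<and>
                 (\<forall>\<Lambda>'. (\<forall>\<Lambda>. Hn A b \<Lambda>' \<le> Hn A b \<Lambda>) \<longrightarrow> \<Lambda>' = \<Lambda>0) \<and>
                 w = transpose A *v \<Lambda>0)) \<and>
         (\<forall>\<Lambda> :: real^'m.
           (\<integral>\<^sup>+ x. indicator orthant x * ennreal (exp (- (\<Lambda> \<bullet> (A *v x)))) \<partial>lborel) =
           (if \<forall>j. 0 < (transpose A *v \<Lambda>) $ j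
            then ennreal (\<Prod>j\<in>UNIV. 1 / (transpose A *v \<Lambda>) $ j) else \<infinity>)) \<and>
         (convex {\<Lambda> :: real^'m. \<forall>j. 0 < (transpose A *v \<Lambda>) $ j} \<and>
         convex_on {\<Lambda>. \<forall>j. 0 < (transpose A *v \<Lambda>) $ j} (\<lambda>\<Lambda>. real_of_ereal (Hn A b \<Lambda>)))"
  proof -
  have inj: "inj (\<lambda>L. transpose A *v L)" by (rule inj_T[OF rankA])
  obtain x0 where x0K: "x0 \<in> Kset A b" and x0pos: "\<forall>j. 0 < x0 $ j" using Kpos by blast
  have Ax0: "A *v x0 = b" using x0K by (simp add: Kset_def)
  obtain L1 where L1: "\<forall>j. 0 < (transpose A *v L1) $ j" using gordan[OF Kcpt x0K] by blast
  have "inj ((*v) (transpose A))" using inj by (simp only: inj_on_def)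
  then obtain B where Binv: "B ** transpose A = mat 1"
    using matrix_left_invertible_injective[of "transpose A"] by blast
  have adj: "(transpose A *v v) \<bullet> e = v \<bullet> (A *v e)" for v e by (simp only: inner_Ax)
  obtain L where Lpos: "\<forall>j. 0 < (transpose A *v L) $ j" and LA: "A *v invv (transpose A *v L) = b"
    using exists_c[OF Binv adj x0pos Ax0 L1] by blast
  have P1: "\<exists>!w :: real^'n. (\<forall>j. 0 < w $ j) \<and> w \<in> span (rows A) \<and>
            (\<forall>l. (\<Sum>j\<in>UNIV. A $ l $ j / w $ j) = b $ l)"
  proof (rule ex1I[where a="transpose A *v L"])
    show "(\<forall>j. 0 < (transpose A *v L) $ j) \<and> transpose A *v L \<in> span (rows A) \<and>
            (\<forall>l. (\<Sum>j\<in>UNIV. A $ l $ j / (transpose A *v L) $ j) = b $ l)"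
      using Lpos LA rowspan_range[of "transpose A *v L" A] sum_cond_iff by blast
  next
    fix w :: "real^'n"
    assume "(\<forall>j. 0 < w $ j) \<and> w \<in> span (rows A) \<and> (\<forall>l. (\<Sum>j\<in>UNIV. A $ l $ j / w $ j) = b $ l)"
    then show "w = transpose A *v L"
      using w_unique[of w "transpose A *v L" A b] Lpos LA rowspan_range[of "transpose A *v L" A] sum_cond_iff
      by blast
  qed
  have P2: "\<forall>w :: real^'n. (\<forall>j. 0 < w $ j) \<and> w \<in> span (rows A) \<and>
            (\<forall>l. (\<Sum>j\<in>UNIV. A $ l $ j / w $ j) = b $ l) \<longrightarrow>
          (orthant_prob_density (exp_density w) \<and> mean_exists (exp_density w) \<and>
             mean_vec (exp_density w) \<in> Kset A b \<and>
           (\<forall>f. orthant_prob_density f \<and> mean_exists f \<and> mean_vec f \<in> Kset A b \<longrightarrow>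
              dens_entropy f \<le> dens_entropy (exp_density w))) \<and>
          (\<exists>\<Lambda>0. (\<forall>\<Lambda>. Hn A b \<Lambda>0 \<le> Hn A b \<Lambda>) \<and>
                 (\<forall>\<Lambda>'. (\<forall>\<Lambda>. Hn A b \<Lambda>' \<le> Hn A b \<Lambda>) \<longrightarrow> \<Lambda>' = \<Lambda>0) \<and>
                 w = transpose A *v \<Lambda>0)"
  proof (intro allI impI)
    fix w :: "real^'n"
    assume h: "(\<forall>j. 0 < w $ j) \<and> w \<in> span (rows A) \<and> (\<forall>l. (\<Sum>j\<in>UNIV. A $ l $ j / w $ j) = b $ l)"
    then have wpos: "\<forall>j. 0 < w $ j" and Aw: "A *v invv w = b" using sum_cond_iff by blast+
    obtain L0 where wL: "w = transpose A *v L0" using h rowspan_range by blast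
    show "(orthant_prob_density (exp_density w) \<and> mean_exists (exp_density w) \<and>
             mean_vec (exp_density w) \<in> Kset A b \<and>
           (\<forall>f. orthant_prob_density f \<and> mean_exists f \<and> mean_vec f \<in> Kset A b \<longrightarrow>
              dens_entropy f \<le> dens_entropy (exp_density w))) \<and>
          (\<exists>\<Lambda>0. (\<forall>\<Lambda>. Hn A b \<Lambda>0 \<le> Hn A b \<Lambda>) \<and>
                 (\<forall>\<Lambda>'. (\<forall>\<Lambda>. Hn A b \<Lambda>' \<le> Hn A b \<Lambda>) \<longrightarrow> \<Lambda>' = \<Lambda>0) \<and>
                 w = transpose A *v \<Lambda>0)"
      using entropy_part[OF wpos Aw wL] Hn_part[OF wpos Aw wL inj] wL by blast
  qed
  show ?thesis using P1 P2 laplace_part[of _ A] convex_part[of A b] by blast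
qed

end
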